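(* Let $A=\mathbb{C}[t]\oplus\mathbb{C}[t]\,\partial_t$, graded by $\deg t=0$, $\deg\partial_t=-1$, with the degree $m=1$ commutative $BV_\infty$ structure $\Delta=\Delta_0+\hbar\Delta_1$ given by $\Delta_0(g(t))=0$, $\Delta_0(g(t)\partial_t)=t\,g(t)$, $\Delta_1(g(t))=0$, $\Delta_1(g(t)\partial_t)=g'(t)$ (and $\Delta_k=0$ for $k\ge2$). Let $B=\mathbb{C}$ with $\Delta'=0$. Define $f=\sum_{i\ge0}\hbar^if_i:A[[\hbar]]\to\mathbb{C}[[\hbar]]$ ($\mathbb{C}[[\hbar]]$-linearly) by $$f_i(t^k)=(-1)^i\,\delta_{k,2i}\,(2i-1)!!,\qquad f_i(g(t)\partial_t)=0,$$ (with $(-1)!!=1$), i.e. $f(t^{2i})=(2i-1)!!(-\hbar)^i$, $f(t^{2i+1})=0$. Then $f$ is a $BV_\infty$ quasi-isomorphism from $(A,\Delta)$ to $(B,\Delta')$. Moreover $f$ is compatible with the pairings: if the pairing on $H(A((\hbar)),\Delta)$ is given by $(t^{2k},t^{2l})=(-1)^k\hbar^{k+l}(2k-1)!!(2l-1)!!$ with all other pairings of monomials $t^a,t^b$ vanishing (extended by the sesquilinearity rule $(g(\hbar)\alpha,\beta)=(\alpha,g(-\hbar)\beta)=g(\hbar)(\alpha,\beta)$), and the pairing on $B[[\hbar]]$ is $(p(\hbar)a,q(\hbar)b)=p(\hbar)q(-\hbar)ab$, then $(f(\alpha),f(\beta))_B=(\alpha,\beta)_A$ for all $\alpha,\beta$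.
   Context: A degree $m$ commutative $BV_\infty$ algebra is a graded commutative unital algebra $A$ with a degree one $\mathbb{C}[[\hbar]]$-linear operator $\Delta=\sum_k\Delta_k\hbar^k$ on $A[[\hbar]]$ ($\hbar$ of degree $1-m$) with $\Delta(1)=0$, $\Delta^2=0$, and $\mathrm{ad}_{\alpha_k}\cdots\mathrm{ad}_{\alpha_1}(\Delta)(1)\equiv0\pmod{\hbar^{k-1}}$ for $k\ge2$, $\mathrm{ad}_\alpha(D)=[D,\alpha]$ the graded commutator. A $BV_\infty$ morphism $f=\sum_kf_k\hbar^k:A[[\hbar]]\to B[[\hbar]]$ is a degree zero $\mathbb{C}[[\hbar]]$-linear map with $f(1_A)=1_B$, $f\circ\Delta=\Delta'\circ f$, and cumulant condition $\kappa_n(f)(\alpha_1,\dots,\alpha_n)\equiv0\pmod{\hbar^{n-1}}$ for all $n\ge2$, where $\kappa_n(f)(\alpha_1,\dots,\alpha_n)=\frac{\partial^n}{\partial J_1\cdots\partial J_n}\big|_{J=0}\log f(e^{\sum_iJ_i\alpha_i})$ (formal parameters $|J_i|=-|\alpha_i|$), equivalently the alternating sum over set partitions $\sum_{k}\sum_{\{I_1,\dots,I_k\}}(-1)^{k-1}(k-1)!\pm_K\prod_jf(\prod_{i\in I_j}\alpha_i)$. It is a quasi-isomorphism if $f_0:H(A,\Delta_0)\to H(B,\Delta'_0)$ is an isomorphism. *)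

theory Defs
  imports "HOL-Computational_Algebra.Polynomial" "HOL-Computational_Algebra.Formal_Power_Series"
          "HOL-Library.Disjoint_Sets" "HOL-Library.Product_Plus" "HOL-Library.Function_Algebras"
begin

section \<open>Generic notions (hbar of degree 1 - m = 0 since m = 1)\<close>

text \<open>Iterated graded commutators applied to an operator D of degree e:
  ad_seq mul D e al d k = ad_{al_{k-1}} ... ad_{al_0} (D), where al_i is homogeneous of
  degree d_i and ad_a(D') = D' o m_a - (-1)^(|D'| |a|) m_a o D'.\<close>
primrec ad_seq :: "('x::ab_group_add \<Rightarrow> 'x \<Rightarrow> 'x) \<Rightarrow> ('x \<Rightarrow> 'x) \<Rightarrow> int \<Rightarrow> (nat \<Rightarrow> 'x)
     \<Rightarrow> (nat \<Rightarrow> int) \<Rightarrow> nat \<Rightarrow> ('x \<Rightarrow> 'x)" where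
  "ad_seq mul D e al d 0 = D"
| "ad_seq mul D e al d (Suc j) =
     (\<lambda>x. if even ((e + (\<Sum>i<j. d i)) * d j)
          then ad_seq mul D e al d j (mul (al j) x) - mul (al j) (ad_seq mul D e al d j x)
          else ad_seq mul D e al d j (mul (al j) x) + mul (al j) (ad_seq mul D e al d j x))"

text \<open>BV_infinity operator conditions on an hbar-series algebra with multiplication mul, unit one,
  homogeneity predicate hom (hom d x: x homogeneous of degree d), hdvd k x: x = 0 mod hbar^k,
  and C[[hbar]]-action sc.\<close>
definition bv_inf_alg :: "('x::ab_group_add \<Rightarrow> 'x \<Rightarrow> 'x) \<Rightarrow> 'x \<Rightarrow> (int \<Rightarrow> 'x \<Rightarrow> bool)
     \<Rightarrow> (nat \<Rightarrow> 'x \<Rightarrow> bool) \<Rightarrow> (complex fps \<Rightarrow> 'x \<Rightarrow> 'x) \<Rightarrow> ('x \<Rightarrow> 'x) \<Rightarrow> bool" where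
  "bv_inf_alg mul one hom hdvd sc D \<longleftrightarrow>
     (\<forall>p x. D (sc p x) = sc p (D x)) \<and> (\<forall>x y. D (x + y) = D x + D y) \<and>
     (\<forall>d x. hom d x \<longrightarrow> hom (d + 1) (D x)) \<and>
     D one = 0 \<and> (\<forall>x. D (D x) = 0) \<and>
     (\<forall>k\<ge>2. \<forall>al d. (\<forall>i<k. hom (d i) (al i)) \<longrightarrow> hdvd (k - 1) (ad_seq mul D 1 al d k one))"

definition block_prod :: "('x \<Rightarrow> 'x \<Rightarrow> 'x) \<Rightarrow> 'x \<Rightarrow> nat set \<Rightarrow> (nat \<Rightarrow> 'x) \<Rightarrow> 'x" where
  "block_prod mul one I al = foldr (\<lambda>i. mul (al i)) (sorted_list_of_set I) one"

definition blk :: "nat set set \<Rightarrow> nat \<Rightarrow> nat set" where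
  "blk P i = (THE I. I \<in> P \<and> i \<in> I)"

text \<open>Koszul sign of reordering al_0 ... al_{n-1} into the blocks of P (blocks ordered by their
  minima, increasing order inside each block); d i is the degree of al_i.\<close>
definition koszul_sign :: "nat \<Rightarrow> nat set set \<Rightarrow> (nat \<Rightarrow> int) \<Rightarrow> int" where
  "koszul_sign n P d = (-1) ^ card {(i, j). i < j \<and> j < n \<and> odd (d i) \<and> odd (d j)
                                         \<and> Min (blk P j) < Min (blk P i)}"

definition cumulant :: "('x \<Rightarrow> 'x \<Rightarrow> 'x) \<Rightarrow> 'x \<Rightarrow> ('x \<Rightarrow> 'y::comm_ring_1) \<Rightarrow> nat
     \<Rightarrow> (nat \<Rightarrow> 'x) \<Rightarrow> (nat \<Rightarrow> int) \<Rightarrow> 'y" where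
  "cumulant mul one f n al d =
     (\<Sum>P\<in>{P. partition_on {..<n} P}.
        of_int ((-1) ^ (card P - 1) * fact (card P - 1) * koszul_sign n P d)
        * (\<Prod>I\<in>P. f (block_prod mul one I al)))"

definition bv_inf_mor :: "('x::ab_group_add \<Rightarrow> 'x \<Rightarrow> 'x) \<Rightarrow> 'x \<Rightarrow> (int \<Rightarrow> 'x \<Rightarrow> bool)
     \<Rightarrow> (complex fps \<Rightarrow> 'x \<Rightarrow> 'x) \<Rightarrow> ('x \<Rightarrow> 'x)
     \<Rightarrow> (int \<Rightarrow> 'y::comm_ring_1 \<Rightarrow> bool) \<Rightarrow> (nat \<Rightarrow> 'y \<Rightarrow> bool) \<Rightarrow> (complex fps \<Rightarrow> 'y \<Rightarrow> 'y)
     \<Rightarrow> ('y \<Rightarrow> 'y) \<Rightarrow> ('x \<Rightarrow> 'y) \<Rightarrow> bool" where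
  "bv_inf_mor mulA oneA homA scA DA homB hdvdB scB DB f \<longleftrightarrow>
     (\<forall>p x. f (scA p x) = scB p (f x)) \<and> (\<forall>x y. f (x + y) = f x + f y) \<and>
     (\<forall>d x. homA d x \<longrightarrow> homB d (f x)) \<and>
     f oneA = 1 \<and> (\<forall>x. f (DA x) = DB (f x)) \<and>
     (\<forall>n\<ge>2. \<forall>al d. (\<forall>i<n. homA (d i) (al i)) \<longrightarrow> hdvdB (n - 1) (cumulant mulA oneA f n al d))"

text \<open>f_0 induces an isomorphism H(A, D0A) \<rightarrow> H(B, D0B) (chain map + bijectivity on cohomology).\<close>
definition quasi_iso0 :: "('a::ab_group_add \<Rightarrow> 'a) \<Rightarrow> ('b::ab_group_add \<Rightarrow> 'b) \<Rightarrow> ('a \<Rightarrow> 'b) \<Rightarrow> bool" where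
  "quasi_iso0 D0A D0B f0 \<longleftrightarrow>
     (\<forall>x y. f0 (x + y) = f0 x + f0 y) \<and>
     (\<forall>a. f0 (D0A a) = D0B (f0 a)) \<and>
     (\<forall>a. D0A a = 0 \<and> f0 a \<in> range D0B \<longrightarrow> a \<in> range D0A) \<and>
     (\<forall>b. D0B b = 0 \<longrightarrow> (\<exists>a. D0A a = 0 \<and> b - f0 a \<in> range D0B))"

section \<open>The algebra A = C[t] + C[t] dt and A[[hbar]]\<close>

text \<open>(g, h) represents g(t) + h(t) dt; g has degree 0, h dt degree -1.\<close>
type_synonym A0 = "complex poly \<times> complex poly"
text \<open>X represents the series sum_n hbar^n X n.\<close>
type_synonym Ah = "nat \<Rightarrow> A0"

text \<open>Graded commutative product (dt odd, so dt * dt = 0).\<close>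
definition mulA0 :: "A0 \<Rightarrow> A0 \<Rightarrow> A0" where
  "mulA0 x y = (fst x * fst y, fst x * snd y + snd x * fst y)"

definition mulAh :: "Ah \<Rightarrow> Ah \<Rightarrow> Ah" where
  "mulAh X Y = (\<lambda>n. \<Sum>i\<le>n. mulA0 (X i) (Y (n - i)))"

definition oneAh :: Ah where
  "oneAh = (\<lambda>n. if n = 0 then (1, 0) else 0)"

definition scAh :: "complex fps \<Rightarrow> Ah \<Rightarrow> Ah" where
  "scAh p X = (\<lambda>n. \<Sum>i\<le>n. (smult (fps_nth p i) (fst (X (n - i))), smult (fps_nth p i) (snd (X (n - i)))))"

definition homA :: "int \<Rightarrow> Ah \<Rightarrow> bool" where
  "homA d X \<longleftrightarrow> (\<forall>n. (d \<noteq> 0 \<longrightarrow> fst (X n) = 0) \<and> (d \<noteq> -1 \<longrightarrow> snd (X n) = 0))"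

definition hdvdA :: "nat \<Rightarrow> Ah \<Rightarrow> bool" where
  "hdvdA k X \<longleftrightarrow> (\<forall>n<k. X n = 0)"

definition hseries_op :: "(nat \<Rightarrow> A0 \<Rightarrow> A0) \<Rightarrow> Ah \<Rightarrow> Ah" where
  "hseries_op D X = (\<lambda>n. \<Sum>k\<le>n. D k (X (n - k)))"

definition Delta0 :: "A0 \<Rightarrow> A0" where
  "Delta0 x = ([:0, 1:] * snd x, 0)"

definition Delta1 :: "A0 \<Rightarrow> A0" where
  "Delta1 x = (pderiv (snd x), 0)"

definition DeltaA_k :: "nat \<Rightarrow> A0 \<Rightarrow> A0" where
  "DeltaA_k k = (if k = 0 then Delta0 else if k = 1 then Delta1 else (\<lambda>_. 0))"

definition DeltaA :: "Ah \<Rightarrow> Ah" where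
  "DeltaA = hseries_op DeltaA_k"

text \<open>(2i-1)!! = 1 * 3 * ... * (2i-1), with (-1)!! = 1.\<close>
definition dfact_odd :: "nat \<Rightarrow> nat" where
  "dfact_odd i = (\<Prod>k<i. 2 * k + 1)"

definition f_i :: "nat \<Rightarrow> A0 \<Rightarrow> complex" where
  "f_i i x = (-1) ^ i * of_nat (dfact_odd i) * coeff (fst x) (2 * i)"

definition hseries_map :: "(nat \<Rightarrow> A0 \<Rightarrow> complex) \<Rightarrow> Ah \<Rightarrow> complex fps" where
  "hseries_map F X = Abs_fps (\<lambda>n. \<Sum>i\<le>n. F i (X (n - i)))"

definition fA :: "Ah \<Rightarrow> complex fps" where
  "fA = hseries_map f_i"

section \<open>B = C, B[[hbar]] = C[[hbar]]\<close>

definition homB :: "int \<Rightarrow> complex fps \<Rightarrow> bool" where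
  "homB d p \<longleftrightarrow> d = 0 \<or> p = 0"

definition hdvdB :: "nat \<Rightarrow> complex fps \<Rightarrow> bool" where
  "hdvdB k p \<longleftrightarrow> (\<forall>n<k. fps_nth p n = 0)"

definition DeltaB :: "complex fps \<Rightarrow> complex fps" where
  "DeltaB p = 0"

definition fps_neg :: "complex fps \<Rightarrow> complex fps" where
  "fps_neg p = Abs_fps (\<lambda>n. (-1) ^ n * fps_nth p n)"

definition pairB :: "complex fps \<Rightarrow> complex fps \<Rightarrow> complex fps" where
  "pairB p q = p * fps_neg q"

definition mono_pair :: "nat \<Rightarrow> nat \<Rightarrow> complex fps" where
  "mono_pair a b = (if even a \<and> even b
     then fps_const ((-1) ^ (a div 2) * of_nat (dfact_odd (a div 2) * dfact_odd (b div 2)))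
          * fps_X ^ (a div 2 + b div 2)
     else 0)"

definition tcoeff :: "Ah \<Rightarrow> nat \<Rightarrow> complex fps" where
  "tcoeff X a = Abs_fps (\<lambda>n. coeff (fst (X n)) a)"

text \<open>The hbar^N coefficient only receives contributions from a, b \<le> 2N (mono_pair a b has
  hbar-order \<ge> a div 2 + b div 2 and vanishes for odd a, b), so the sum is truncated exactly.\<close>
definition pairA :: "Ah \<Rightarrow> Ah \<Rightarrow> complex fps" where
  "pairA X Y = Abs_fps (\<lambda>N. \<Sum>a\<le>2 * N. \<Sum>b\<le>2 * N.
      fps_nth (tcoeff X a * mono_pair a b * fps_neg (tcoeff Y b)) N)"

end

theory Submission imports Defs begin

type_synonym cpf = "complex poly fps"

definition cc :: "nat \<Rightarrow> complex" where "cc i = (-1)^i * of_nat (dfact_odd i)"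
definition FF :: "cpf \<Rightarrow> complex fps" where
  "FF Z = Abs_fps (\<lambda>n. \<Sum>i\<le>n. cc i * coeff (fps_nth Z (n-i)) (2*i))"
definition Ec :: "complex fps \<Rightarrow> cpf" where "Ec c = Abs_fps (\<lambda>n. [: fps_nth c n :])"
definition Dz :: "cpf \<Rightarrow> cpf" where "Dz Z = Abs_fps (\<lambda>n. pderiv (fps_nth Z n))"
definition tt :: cpf where "tt = fps_const [:0,1:]"
definition tc :: "nat \<Rightarrow> cpf \<Rightarrow> complex fps" where "tc a Z = Abs_fps (\<lambda>n. coeff (fps_nth Z n) a)"

lemma cc_Suc: "cc (Suc i) = - cc i * of_nat (2*i+1)"
  by (simp add: cc_def dfact_odd_def algebra_simps)

lemma pderiv_sum: "pderiv (\<Sum>i\<in>S. f i) = (\<Sum>i\<in>S. pderiv (f i))"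
proof (cases "finite S")
  case True then show ?thesis by (induction S rule: finite_induct) (simp_all add: pderiv_add)
qed simp

lemma tc_nth[simp]: "fps_nth (tc a Z) n = coeff (fps_nth Z n) a"
  by (simp add: tc_def)

lemma FF_add: "FF (Z + W) = FF Z + FF W"
  by (rule fps_ext) (simp add: FF_def distrib_left sum.distrib)
lemma FF_0[simp]: "FF 0 = 0"
  by (rule fps_ext) (simp add: FF_def)
lemma FF_uminus: "FF (- Z) = - FF Z"
  by (rule fps_ext) (simp add: FF_def sum_negf)
lemma FF_diff: "FF (Z - W) = FF Z - FF W"
  using FF_add[of Z "-W"] by (simp add: FF_uminus)
lemma FF_sum: "FF (\<Sum>i\<in>S. Z i) = (\<Sum>i\<in>S. FF (Z i))"
proof (cases "finite S")
  case True then show ?thesis by (induction S rule: finite_induct) (simp_all add: FF_add)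
qed simp

lemma FF_1[simp]: "FF 1 = 1"
proof (rule fps_ext)
  fix n
  show "fps_nth (FF 1) n = fps_nth 1 n"
  proof (cases n)
    case 0 then show ?thesis by (simp add: FF_def cc_def dfact_odd_def)
  next
    case (Suc m)
    have "cc i * coeff (fps_nth 1 (n - i)) (2*i) = 0" if "i \<le> n" for i
      using that Suc by (cases "i = n") auto
    then show ?thesis using Suc by (simp add: FF_def)
  qed
qed

lemma nth_mult_cong:
  assumes "\<And>k. k \<le> n \<Longrightarrow> fps_nth A k = fps_nth A' k" "\<And>k. k \<le> n \<Longrightarrow> fps_nth B k = fps_nth B' k"
  shows "fps_nth (A * B) n = fps_nth (A' * B') n"
  using assms by (simp add: fps_mult_nth)

lemma coeff_const_mult: "coeff ([:a:] * p) k = a * coeff p k"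
  by simp

lemma tc_lin: "tc a (Ec c * Z) = c * tc a Z"
  by (rule fps_ext) (simp add: tc_def Ec_def fps_mult_nth coeff_sum)

definition SS :: "nat \<Rightarrow> cpf \<Rightarrow> complex fps" where
  "SS n Z = (\<Sum>i\<le>n. fps_const (cc i) * fps_X ^ i * tc (2*i) Z)"

lemma SS_nth: assumes "k \<le> n" shows "fps_nth (SS n Z) k = fps_nth (FF Z) k"
proof -
  have "fps_nth (SS n Z) k = (\<Sum>i\<le>n. cc i * (if k < i then 0 else coeff (fps_nth Z (k - i)) (2*i)))"
    by (simp add: SS_def fps_sum_nth mult.assoc fps_X_power_mult_nth cong: if_cong)
  also have "\<dots> = (\<Sum>i\<le>k. cc i * coeff (fps_nth Z (k - i)) (2*i))"
    by (rule sum.mono_neutral_cong_right) (use assms in auto)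
  finally show ?thesis by (simp add: FF_def)
qed

lemma SS_lin: "SS n (Ec c * Z) = c * SS n Z"
proof -
  have "SS n (Ec c * Z) = (\<Sum>i\<le>n. c * (fps_const (cc i) * fps_X ^ i * tc (2*i) Z))"
    unfolding SS_def tc_lin by (simp add: mult_ac)
  then show ?thesis by (simp add: SS_def sum_distrib_left)
qed

lemma FF_lin: "FF (Ec c * Z) = c * FF Z"
proof (rule fps_ext)
  fix n
  have "fps_nth (FF (Ec c * Z)) n = fps_nth (SS n (Ec c * Z)) n" by (simp add: SS_nth)
  also have "\<dots> = fps_nth (c * SS n Z) n" by (simp add: SS_lin)
  also have "\<dots> = fps_nth (c * FF Z) n" by (rule nth_mult_cong) (simp_all add: SS_nth)
  finally show "fps_nth (FF (Ec c * Z)) n = fps_nth (c * FF Z) n" .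
qed

lemma Ec_1[simp]: "Ec 1 = 1"
  by (rule fps_ext) (simp add: Ec_def)
lemma Ec_X: "Ec fps_X = fps_X"
  by (rule fps_ext) (simp add: Ec_def)
lemma FF_X: "FF (fps_X * Z) = fps_X * FF Z"
  using FF_lin[of fps_X Z] by (simp add: Ec_X)

lemma FF_stein: "FF (tt * Z) = - fps_X * FF (Dz Z)"
proof (rule fps_ext)
  fix n
  show "fps_nth (FF (tt * Z)) n = fps_nth (- fps_X * FF (Dz Z)) n"
  proof (cases n)
    case 0 then show ?thesis by (simp add: FF_def tt_def)
  next
    case (Suc m)
    have "fps_nth (FF (tt * Z)) n = (\<Sum>i\<le>Suc m. cc i * coeff (pCons 0 (fps_nth Z (Suc m - i))) (2*i))"
      using Suc by (simp add: FF_def tt_def)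
    also have "\<dots> = (\<Sum>i\<le>m. cc (Suc i) * coeff (fps_nth Z (m - i)) (2*i+1))"
      by (subst sum.atMost_Suc_shift) simp
    also have "\<dots> = - (\<Sum>i\<le>m. cc i * coeff (pderiv (fps_nth Z (m - i))) (2*i))"
      by (simp add: cc_Suc coeff_pderiv sum_negf[symmetric] algebra_simps)
    also have "\<dots> = fps_nth (- fps_X * FF (Dz Z)) n"
      using Suc by (simp add: FF_def Dz_def)
    finally show ?thesis .
  qed
qed

lemma Dz_add: "Dz (A + B) = Dz A + Dz B"
  by (rule fps_ext) (simp add: Dz_def pderiv_add)
lemma Dz_0[simp]: "Dz 0 = 0"
  by (rule fps_ext) (simp add: Dz_def)
lemma Dz_uminus: "Dz (- A) = - Dz A"
  by (rule fps_ext) (simp add: Dz_def pderiv_minus)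
lemma Dz_diff: "Dz (A - B) = Dz A - Dz B"
  by (rule fps_ext) (simp add: Dz_def pderiv_diff)
lemma Dz_mult: "Dz (A * B) = Dz A * B + A * Dz B"
proof (rule fps_ext)
  fix n
  have "fps_nth (Dz (A * B)) n = (\<Sum>i = 0..n. pderiv (fps_nth A i) * fps_nth B (n - i) + fps_nth A i * pderiv (fps_nth B (n - i)))"
    by (simp add: Dz_def fps_mult_nth pderiv_sum pderiv_mult add.commute mult.commute)
  also have "\<dots> = fps_nth (Dz A * B + A * Dz B) n"
    by (simp add: Dz_def fps_mult_nth sum.distrib)
  finally show "fps_nth (Dz (A * B)) n = fps_nth (Dz A * B + A * Dz B) n" .
qed
lemma Dz_Ec[simp]: "Dz (Ec c) = 0"
  by (rule fps_ext) (simp add: Dz_def Ec_def pderiv_pCons)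
lemma Dz_1[simp]: "Dz 1 = 0"
  using Dz_Ec[of 1] by simp
lemma Dz_X[simp]: "Dz fps_X = 0"
  using Dz_Ec[of fps_X] by (simp add: Ec_X)
lemma Dz_tt[simp]: "Dz tt = 1"
  by (rule fps_ext) (simp add: Dz_def tt_def pderiv_pCons)

lemma Dz_prod:
  assumes "finite B"
  shows "Dz (\<Prod>i\<in>B. y i) = (\<Sum>j\<in>B. Dz (y j) * (\<Prod>i\<in>B-{j}. y i))"
  using assms
proof (induction B rule: finite_induct)
  case empty then show ?case by simp
next
  case (insert a B)
  have "Dz (\<Prod>i\<in>insert a B. y i) = Dz (y a) * (\<Prod>i\<in>B. y i) + y a * Dz (\<Prod>i\<in>B. y i)"
    using insert by (simp add: Dz_mult)
  also have "\<dots> = Dz (y a) * (\<Prod>i\<in>B. y i) + (\<Sum>j\<in>B. Dz (y j) * (y a * (\<Prod>i\<in>B-{j}. y i)))"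
    using insert by (simp add: sum_distrib_left algebra_simps)
  also have "\<dots> = (\<Sum>j\<in>insert a B. Dz (y j) * (\<Prod>i\<in>insert a B-{j}. y i))"
  proof -
    have "(\<Prod>i\<in>insert a B-{j}. y i) = y a * (\<Prod>i\<in>B-{j}. y i)" if "j \<in> B" for j
    proof -
      have "insert a B - {j} = insert a (B - {j})" using that insert by auto
      then show ?thesis using insert by simp
    qed
    moreover have "insert a B - {a} = B" using insert by auto
    ultimately show ?thesis using insert by simp
  qed
  finally show ?case .
qed


definition phi1 :: "Ah \<Rightarrow> cpf" where "phi1 X = Abs_fps (\<lambda>n. fst (X n))"
definition phi2 :: "Ah \<Rightarrow> cpf" where "phi2 X = Abs_fps (\<lambda>n. snd (X n))"
definition Psi :: "Ah \<Rightarrow> cpf \<times> cpf" where "Psi X = (phi1 X, phi2 X)"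
definition MM :: "cpf \<times> cpf \<Rightarrow> cpf \<times> cpf \<Rightarrow> cpf \<times> cpf" where
  "MM a b = (fst a * fst b, fst a * snd b + snd a * fst b)"
definition DD :: "cpf \<times> cpf \<Rightarrow> cpf \<times> cpf" where
  "DD a = (tt * snd a + fps_X * Dz (snd a), 0)"

lemma phi1_nth[simp]: "fps_nth (phi1 X) n = fst (X n)" by (simp add: phi1_def)
lemma phi2_nth[simp]: "fps_nth (phi2 X) n = snd (X n)" by (simp add: phi2_def)

lemma Ah_eq: "phi1 X = phi1 Y \<Longrightarrow> phi2 X = phi2 Y \<Longrightarrow> X = Y"
proof (rule ext)
  fix n assume "phi1 X = phi1 Y" "phi2 X = phi2 Y"
  then have "fps_nth (phi1 X) n = fps_nth (phi1 Y) n" "fps_nth (phi2 X) n = fps_nth (phi2 Y) n" by simp_all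
  then show "X n = Y n" by (simp add: prod_eq_iff)
qed

lemma Psi_inj: "Psi X = Psi Y \<Longrightarrow> X = Y"
  unfolding Psi_def by (rule Ah_eq) auto

lemma phi1_add: "phi1 (X + Y) = phi1 X + phi1 Y" by (rule fps_ext) simp
lemma phi2_add: "phi2 (X + Y) = phi2 X + phi2 Y" by (rule fps_ext) simp
lemma phi1_diff: "phi1 (X - Y) = phi1 X - phi1 Y" by (rule fps_ext) simp
lemma phi2_diff: "phi2 (X - Y) = phi2 X - phi2 Y" by (rule fps_ext) simp
lemma phi1_0[simp]: "phi1 0 = 0" by (rule fps_ext) simp
lemma phi2_0[simp]: "phi2 0 = 0" by (rule fps_ext) simp

lemma phi1_mul: "phi1 (mulAh X Y) = phi1 X * phi1 Y"
  by (rule fps_ext) (simp add: mulAh_def fst_sum mulA0_def fps_mult_nth atLeast0AtMost)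
lemma phi2_mul: "phi2 (mulAh X Y) = phi1 X * phi2 Y + phi2 X * phi1 Y"
  by (rule fps_ext) (simp add: mulAh_def snd_sum mulA0_def fps_mult_nth atLeast0AtMost sum.distrib)
lemma phi1_one: "phi1 oneAh = 1"
  by (rule fps_ext) (simp add: oneAh_def)
lemma phi2_one: "phi2 oneAh = 0"
  by (rule fps_ext) (simp add: oneAh_def)
lemma phi1_sc: "phi1 (scAh p X) = Ec p * phi1 X"
  by (rule fps_ext) (simp add: scAh_def fst_sum Ec_def fps_mult_nth atLeast0AtMost)
lemma phi2_sc: "phi2 (scAh p X) = Ec p * phi2 X"
  by (rule fps_ext) (simp add: scAh_def snd_sum Ec_def fps_mult_nth atLeast0AtMost)

lemma DeltaA_nth: "DeltaA X n = Delta0 (X n) + (if n = 0 then 0 else Delta1 (X (n - 1)))"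
proof (cases n)
  case 0 then show ?thesis by (simp add: DeltaA_def hseries_op_def DeltaA_k_def)
next
  case (Suc m)
  have "DeltaA X n = DeltaA_k 0 (X (Suc m)) + (\<Sum>k\<le>m. DeltaA_k (Suc k) (X (m - k)))"
    unfolding DeltaA_def hseries_op_def Suc by (subst sum.atMost_Suc_shift) simp
  also have "(\<Sum>k\<le>m. DeltaA_k (Suc k) (X (m - k))) = (\<Sum>k\<le>m. if k = 0 then Delta1 (X m) else 0)"
    by (rule sum.cong) (auto simp: DeltaA_k_def)
  also have "\<dots> = Delta1 (X m)" by simp
  finally show ?thesis using Suc by (simp add: DeltaA_k_def)
qed

lemma phi1_Delta: "phi1 (DeltaA X) = tt * phi2 X + fps_X * Dz (phi2 X)"
  by (rule fps_ext) (simp add: DeltaA_nth Delta0_def Delta1_def tt_def Dz_def)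
lemma phi2_Delta: "phi2 (DeltaA X) = 0"
  by (rule fps_ext) (simp add: DeltaA_nth Delta0_def Delta1_def)

lemma Psi_mul: "Psi (mulAh X Y) = MM (Psi X) (Psi Y)"
  by (simp add: Psi_def MM_def phi1_mul phi2_mul)
lemma Psi_Delta: "Psi (DeltaA X) = DD (Psi X)"
  by (simp add: Psi_def DD_def phi1_Delta phi2_Delta)
lemma Psi_add: "Psi (X + Y) = Psi X + Psi Y"
  by (simp add: Psi_def phi1_add phi2_add)
lemma Psi_diff: "Psi (X - Y) = Psi X - Psi Y"
  by (simp add: Psi_def phi1_diff phi2_diff)

lemma fA_eq: "fA X = FF (phi1 X)"
  unfolding fA_def hseries_map_def FF_def f_i_def cc_def by simp

lemma Psi_ad_seq:
  "Psi (ad_seq mulAh DeltaA e al d j x) = ad_seq MM DD e (\<lambda>i. Psi (al i)) d j (Psi x)"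
proof (induction j arbitrary: x)
  case 0 then show ?case by (simp add: Psi_Delta)
next
  case (Suc j) show ?case
    by (simp only: ad_seq.simps if_distrib[where f=Psi] Psi_diff Psi_add Psi_mul Suc.IH)
qed

definition homP :: "int \<Rightarrow> cpf \<times> cpf \<Rightarrow> bool" where
  "homP d a \<longleftrightarrow> (d \<noteq> 0 \<longrightarrow> fst a = 0) \<and> (d \<noteq> -1 \<longrightarrow> snd a = 0)"

lemma homA_Psi: "homA d X \<longleftrightarrow> homP d (Psi X)"
proof -
  have e1: "phi1 X = 0 \<longleftrightarrow> (\<forall>n. fst (X n) = 0)"
    by (metis fps_ext fps_zero_nth phi1_nth)
  have e2: "phi2 X = 0 \<longleftrightarrow> (\<forall>n. snd (X n) = 0)"
    by (metis fps_ext fps_zero_nth phi2_nth)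
  show ?thesis unfolding homA_def homP_def Psi_def using e1 e2 by auto
qed

lemma MM_0[simp]: "MM a 0 = 0" "MM 0 a = 0" by (simp_all add: MM_def zero_prod_def)
lemma DD_0[simp]: "DD 0 = 0" by (simp add: DD_def zero_prod_def)

lemma homP_cases: "homP d a \<Longrightarrow> (d = 0 \<and> a = (fst a, 0)) \<or> (d = -1 \<and> a = (0, snd a)) \<or> a = 0"
  unfolding homP_def by (cases a) (auto simp: zero_prod_def)

lemma MM_sign:
  assumes "homP e c" "homP d b"
  shows "(if even (e * d) then MM c (MM b x) - MM b (MM c x) else MM c (MM b x) + MM b (MM c x)) = 0"
  using homP_cases[OF assms(1)] homP_cases[OF assms(2)]
proof (elim disjE conjE)
qed (auto simp: MM_def algebra_simps prod_eq_iff)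


lemma A2_form:
  assumes h0: "homP (d 0) (a 0)" and h1: "homP (d 1) (a 1)"
  shows "\<exists>c. homP (1 + d 0 + d 1) c \<and> fps_nth (fst c) 0 = 0 \<and> fps_nth (snd c) 0 = 0 \<and>
            (\<forall>x. ad_seq MM DD 1 a d (Suc (Suc 0)) x = MM c x)"
  using homP_cases[OF h0] homP_cases[OF h1]
proof (elim disjE conjE)
  assume d0: "d 0 = 0" and a0: "a 0 = (fst (a 0), 0)" and d1: "d 1 = 0" and a1: "a 1 = (fst (a 1), 0)"
  show ?thesis
  proof (intro exI[of _ 0] conjI allI)
    fix x :: "cpf \<times> cpf"
    show "ad_seq MM DD 1 a d (Suc (Suc 0)) x = MM 0 x"
    proof -
      obtain p where p: "a 0 = (if d 0 = 0 then (p, 0) else (0, p))" using a0 d0 by (metis zero_neq_neg_one)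
      obtain r where r: "a 1 = (if d 1 = 0 then (r, 0) else (0, r))" using a1 d1 by (metis zero_neq_neg_one)
      show ?thesis using d0 d1 p r by (simp add: MM_def DD_def Dz_mult Dz_add algebra_simps prod_eq_iff)
    qed
  qed (simp_all add: homP_def)
next
  assume d0: "d 0 = 0" and a0: "a 0 = (fst (a 0), 0)" and d1: "d 1 = -1" and a1: "a 1 = (0, snd (a 1))"
  show ?thesis
  proof (intro exI[of _ "(fps_X * Dz (fst (a 0)) * snd (a 1), 0)"] conjI allI)
    fix x :: "cpf \<times> cpf"
    show "ad_seq MM DD 1 a d (Suc (Suc 0)) x = MM (fps_X * Dz (fst (a 0)) * snd (a 1), 0) x"
    proof -
      obtain p where p: "a 0 = (if d 0 = 0 then (p, 0) else (0, p))" using a0 d0 by (metis zero_neq_neg_one)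
      obtain r where r: "a 1 = (if d 1 = 0 then (r, 0) else (0, r))" using a1 d1 by (metis zero_neq_neg_one)
      show ?thesis using d0 d1 p r by (simp add: MM_def DD_def Dz_mult Dz_add algebra_simps prod_eq_iff)
    qed
  qed (simp_all add: homP_def d0 d1 d1[unfolded One_nat_def])
next
  assume d0: "d 0 = -1" and a0: "a 0 = (0, snd (a 0))" and d1: "d 1 = 0" and a1: "a 1 = (fst (a 1), 0)"
  show ?thesis
  proof (intro exI[of _ "(fps_X * Dz (fst (a 1)) * snd (a 0), 0)"] conjI allI)
    fix x :: "cpf \<times> cpf"
    show "ad_seq MM DD 1 a d (Suc (Suc 0)) x = MM (fps_X * Dz (fst (a 1)) * snd (a 0), 0) x"
    proof -
      obtain p where p: "a 0 = (if d 0 = 0 then (p, 0) else (0, p))" using a0 d0 by (metis zero_neq_neg_one)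
      obtain r where r: "a 1 = (if d 1 = 0 then (r, 0) else (0, r))" using a1 d1 by (metis zero_neq_neg_one)
      show ?thesis using d0 d1 p r by (simp add: MM_def DD_def Dz_mult Dz_add algebra_simps prod_eq_iff)
    qed
  qed (simp_all add: homP_def d0 d1 d1[unfolded One_nat_def])
next
  assume d0: "d 0 = -1" and a0: "a 0 = (0, snd (a 0))" and d1: "d 1 = -1" and a1: "a 1 = (0, snd (a 1))"
  show ?thesis
  proof (intro exI[of _ "(0, fps_X * (snd (a 0) * Dz (snd (a 1)) - snd (a 1) * Dz (snd (a 0))))"] conjI allI)
    fix x :: "cpf \<times> cpf"
    show "ad_seq MM DD 1 a d (Suc (Suc 0)) x = MM (0, fps_X * (snd (a 0) * Dz (snd (a 1)) - snd (a 1) * Dz (snd (a 0)))) x"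
    proof -
      obtain p where p: "a 0 = (if d 0 = 0 then (p, 0) else (0, p))" using a0 d0 by (metis zero_neq_neg_one)
      obtain r where r: "a 1 = (if d 1 = 0 then (r, 0) else (0, r))" using a1 d1 by (metis zero_neq_neg_one)
      show ?thesis using d0 d1 p r by (simp add: MM_def DD_def Dz_mult Dz_add Dz_diff algebra_simps prod_eq_iff)
    qed
  qed (simp_all add: homP_def d0 d1 d1[unfolded One_nat_def])
next
  assume a0: "a 0 = 0"
  show ?thesis
  proof (intro exI[of _ 0] conjI allI)
    fix x :: "cpf \<times> cpf"
    show "ad_seq MM DD 1 a d (Suc (Suc 0)) x = MM 0 x" using a0 by simp
  qed (simp_all add: homP_def)
next
  assume a1: "a 1 = 0"
  show ?thesis
  proof (intro exI[of _ 0] conjI allI)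
    fix x :: "cpf \<times> cpf"
    show "ad_seq MM DD 1 a d (Suc (Suc 0)) x = MM 0 x" using a1 by simp
  qed (simp_all add: homP_def)
qed ((rule exI[of _ 0], simp add: homP_def)+)

lemma homP_sum: "homP e c \<Longrightarrow> homP e' c \<Longrightarrow> e \<noteq> e' \<Longrightarrow> True" by simp

lemma ad3_zero:
  assumes "\<And>i. i < 3 \<Longrightarrow> homP (d i) (a i)"
  shows "ad_seq MM DD 1 a d (Suc (Suc (Suc 0))) x = 0"
proof -
  obtain c where c: "homP (1 + d 0 + d 1) c" "\<forall>x. ad_seq MM DD 1 a d (Suc (Suc 0)) x = MM c x"
    using A2_form[of d a] assms by fastforce
  have e: "1 + sum d {..<Suc (Suc 0)} = 1 + d 0 + d 1" by simp
  have A2: "ad_seq MM DD 1 a d (Suc (Suc 0)) = (\<lambda>y. MM c y)" using c(2) by (intro ext) blast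
  have "ad_seq MM DD 1 a d (Suc (Suc (Suc 0))) x =
     (if even ((1 + sum d {..<Suc (Suc 0)}) * d (Suc (Suc 0)))
      then ad_seq MM DD 1 a d (Suc (Suc 0)) (MM (a (Suc (Suc 0))) x) - MM (a (Suc (Suc 0))) (ad_seq MM DD 1 a d (Suc (Suc 0)) x)
      else ad_seq MM DD 1 a d (Suc (Suc 0)) (MM (a (Suc (Suc 0))) x) + MM (a (Suc (Suc 0))) (ad_seq MM DD 1 a d (Suc (Suc 0)) x))"
    by (simp only: ad_seq.simps(2))
  also have "\<dots> = (if even ((1 + d 0 + d 1) * d 2) then MM c (MM (a 2) x) - MM (a 2) (MM c x)
      else MM c (MM (a 2) x) + MM (a 2) (MM c x))"
    unfolding A2 e by (simp add: numeral_2_eq_2)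
  also have "\<dots> = 0" using MM_sign[OF c(1) assms[of 2], of x] by simp
  finally show ?thesis .
qed

lemma adk_zero:
  assumes "\<And>i. i < k \<Longrightarrow> homP (d i) (a i)" "k \<ge> 3"
  shows "ad_seq MM DD 1 a d k x = 0"
  using assms
proof (induction k arbitrary: x)
  case 0 then show ?case by simp
next
  case (Suc k)
  show ?case
  proof (cases "k = 2")
    case True
    then show ?thesis using ad3_zero[of d a x] Suc.prems by (simp add: numeral_2_eq_2 numeral_3_eq_3)
  next
    case False
    then have "k \<ge> 3" using Suc.prems(2) by simp
    then have "\<And>y. ad_seq MM DD 1 a d k y = 0" using Suc.IH Suc.prems(1) by simp
    then show ?thesis by simp
  qed
qed


lemma part_disj: "partition_on V P \<Longrightarrow> A \<in> P \<Longrightarrow> B \<in> P \<Longrightarrow> x \<in> A \<Longrightarrow> x \<in> B \<Longrightarrow> A = B"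
  using pairwiseD[OF partition_onD2, of V P A B] by (auto simp: disjnt_def)

lemma rem_part:
  assumes pv: "partition_on V P" and B0: "B0 \<in> P" "w \<in> B0" and wP: "{w} \<notin> P"
  shows "partition_on (V - {w}) (insert (B0 - {w}) (P - {B0}))" "B0 - {w} \<notin> P - {B0}"
    "B0 - {w} \<noteq> {}"
proof -
  have uniq: "C = B0" if "C \<in> P" "w \<in> C" for C
    using part_disj[OF pv that(1) B0(1) that(2) B0(2)] .
  show Bne: "B0 - {w} \<noteq> {}"
  proof
    assume "B0 - {w} = {}"
    then have "B0 = {w}" using B0 by auto
    then show False using B0 wP by auto
  qed
  show "B0 - {w} \<notin> P - {B0}"
  proof
    assume a: "B0 - {w} \<in> P - {B0}"
    obtain z where z: "z \<in> B0 - {w}" using Bne by auto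
    have "B0 - {w} = B0" using part_disj[OF pv _ B0(1), of "B0 - {w}" z] a z by auto
    then show False using a by auto
  qed
  show "partition_on (V - {w}) (insert (B0 - {w}) (P - {B0}))"
    unfolding partition_on_def
  proof (intro conjI)
    show "\<Union>(insert (B0 - {w}) (P - {B0})) = V - {w}"
    proof (rule set_eqI)
      fix x
      have V: "V = \<Union>P" using partition_onD1[OF pv] .
      show "x \<in> \<Union>(insert (B0 - {w}) (P - {B0})) \<longleftrightarrow> x \<in> V - {w}"
      proof
        assume "x \<in> \<Union>(insert (B0 - {w}) (P - {B0}))"
        then obtain C where C: "C \<in> insert (B0 - {w}) (P - {B0})" "x \<in> C" by blast
        show "x \<in> V - {w}"
        proof (cases "C = B0 - {w}")
          case True then show ?thesis using C B0 V by blast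
        next
          case False
          then have C': "C \<in> P" "C \<noteq> B0" using C by auto
          have "x \<noteq> w" using uniq[of C] C' C by auto
          then show ?thesis using C' C V by blast
        qed
      next
        assume x: "x \<in> V - {w}"
        then obtain C where C: "C \<in> P" "x \<in> C" using V by blast
        show "x \<in> \<Union>(insert (B0 - {w}) (P - {B0}))"
        proof (cases "C = B0")
          case True then show ?thesis using C x by blast
        next
          case False then show ?thesis using C by blast
        qed
      qed
    qed
    show "disjoint (insert (B0 - {w}) (P - {B0}))"
    proof (rule pairwiseI)
      fix A C assume A: "A \<in> insert (B0 - {w}) (P - {B0})" and C: "C \<in> insert (B0 - {w}) (P - {B0})"
        and AC: "A \<noteq> C"
      show "disjnt A C"
      proof (rule ccontr)
        assume "\<not> disjnt A C"
        then obtain z where z: "z \<in> A" "z \<in> C" by (auto simp: disjnt_def)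
        show False
        proof (cases "A = B0 - {w}")
          case True
          then have "C \<in> P - {B0}" using C AC by auto
          then show False using part_disj[OF pv B0(1), of C z] z True by auto
        next
          case False
          then have A': "A \<in> P - {B0}" using A by auto
          show False
          proof (cases "C = B0 - {w}")
            case True
            then show False using part_disj[OF pv B0(1), of A z] z A' by auto
          next
            case False
            then have "C \<in> P - {B0}" using C by auto
            then show False using part_disj[OF pv, of A C z] z A' AC by auto
          qed
        qed
      qed
    qed
    show "{} \<notin> insert (B0 - {w}) (P - {B0})" using Bne partition_onD3[OF pv] by auto
  qed
qed

lemma the_blk:
  assumes pv: "partition_on V P" and B0: "B0 \<in> P" "w \<in> B0"
  shows "(THE B. B \<in> P \<and> w \<in> B) = B0"
proof (rule the_equality)
  show "B0 \<in> P \<and> w \<in> B0" using B0 by simp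
  show "B = B0" if "B \<in> P \<and> w \<in> B" for B
    using part_disj[OF pv _ B0(1), of B w] that B0 by blast
qed

lemma sum_partitions_remove:
  fixes g :: "'a set set \<Rightarrow> 'b::comm_monoid_add"
  assumes fin: "finite V" and wV: "w \<in> V"
  shows "(\<Sum>P\<in>{P. partition_on V P}. g P) =
         (\<Sum>Q\<in>{Q. partition_on (V-{w}) Q}. g (insert {w} Q) + (\<Sum>B\<in>Q. g (insert (insert w B) (Q - {B}))))"
proof -
  define S where "S = {P. partition_on V P}"
  define PQ where "PQ = {Q. partition_on (V-{w}) Q}"
  define S1 where "S1 = {P\<in>S. {w} \<in> P}"
  define S2 where "S2 = {P\<in>S. {w} \<notin> P}"
  have finS: "finite S" unfolding S_def using fin by (rule finitely_many_partition_on)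
  have finPQ: "finite PQ" unfolding PQ_def using fin by (simp add: finitely_many_partition_on)
  have finQ: "finite Q" if "Q \<in> PQ" for Q
    using that fin finite_elements[of "V-{w}" Q] unfolding PQ_def by auto
  have wnot: "w \<notin> B" if "Q \<in> PQ" "B \<in> Q" for Q B
    using that unfolding PQ_def partition_on_def by auto
  have split: "sum g S = sum g S1 + sum g S2"
    unfolding S1_def S2_def using finS by (simp add: sum.Int_Diff[of S g "{P. {w} \<in> P}"] Int_def set_diff_eq)
  have part1: "sum g S1 = (\<Sum>Q\<in>PQ. g (insert {w} Q))"
  proof -
    have "bij_betw (insert {w}) PQ S1"
    proof (rule bij_betwI[where g = "\<lambda>P. P - {{w}}"])
      show "insert {w} \<in> PQ \<rightarrow> S1"
      proof
        fix Q assume Q: "Q \<in> PQ"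
        have "disjnt {w} (\<Union>Q)" using Q unfolding PQ_def partition_on_def by (auto simp: disjnt_def)
        then have "partition_on V (insert {w} Q)" using Q wV unfolding PQ_def
          by (subst partition_on_insert) auto
        then show "insert {w} Q \<in> S1" unfolding S1_def S_def by auto
      qed
      show "(\<lambda>P. P - {{w}}) \<in> S1 \<rightarrow> PQ"
      proof
        fix P assume P: "P \<in> S1"
        then have pv: "partition_on V P" and wP: "{w} \<in> P" unfolding S1_def S_def by auto
        have PI: "P = insert {w} (P - {{w}})" using wP by auto
        have "w \<notin> C" if "C \<in> P" "C \<noteq> {w}" for C
          using part_disj[OF pv wP that(1)] that(2) by auto
        then have "disjnt {w} (\<Union>(P - {{w}}))" by (auto simp: disjnt_def)
        then have "partition_on V (insert {w} (P - {{w}})) \<longleftrightarrow> partition_on (V - {w}) (P - {{w}}) \<and> {w} \<subseteq> V \<and> {w} \<noteq> {}"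
          by (rule partition_on_insert)
        then show "P - {{w}} \<in> PQ" using pv PI unfolding PQ_def by auto
      qed
      show "insert {w} x - {{w}} = x" if "x \<in> PQ" for x
        using that unfolding PQ_def partition_on_def by auto
      show "insert {w} (y - {{w}}) = y" if "y \<in> S1" for y
        using that unfolding S1_def by auto
    qed
    then show ?thesis by (simp add: sum.reindex_bij_betw[symmetric])
  qed
  define SG where "SG = Sigma PQ (\<lambda>Q. Q)"
  define ins2 where "ins2 = (\<lambda>(Q::'a set set, B::'a set). insert (insert w B) (Q - {B}))"
  define inv2 where "inv2 = (\<lambda>P::'a set set. (insert ((THE B. B \<in> P \<and> w \<in> B) - {w}) (P - {THE B. B \<in> P \<and> w \<in> B}),
                                           (THE B. B \<in> P \<and> w \<in> B) - {w}))"
  have part2: "sum g S2 = (\<Sum>Q\<in>PQ. \<Sum>B\<in>Q. g (insert (insert w B) (Q - {B})))"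
  proof -
    have "(\<Sum>Q\<in>PQ. \<Sum>B\<in>Q. g (insert (insert w B) (Q - {B}))) = (\<Sum>z\<in>SG. g (ins2 z))"
      unfolding SG_def ins2_def using finPQ finQ by (subst sum.Sigma) (auto simp: prod.case_distrib)
    also have "\<dots> = sum g S2"
    proof (rule sum.reindex_bij_betw)
      show "bij_betw ins2 SG S2"
      proof (rule bij_betwI[where g = inv2])
        show "ins2 \<in> SG \<rightarrow> S2"
        proof
          fix z assume z: "z \<in> SG"
          then obtain Q B where zq: "z = (Q, B)" and Q: "Q \<in> PQ" and B: "B \<in> Q" unfolding SG_def by auto
          have pq: "partition_on (V - {w}) Q" using Q unfolding PQ_def by auto
          have Bne: "B \<noteq> {}" using partition_onD3[OF pq] B by auto
          have d1: "disjnt B (\<Union>(Q - {B}))"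
          proof -
            have "B \<inter> C = {}" if "C \<in> Q - {B}" for C
              using part_disj[OF pq B, of C] that by auto
            then show ?thesis by (auto simp: disjnt_def)
          qed
          have QI: "Q = insert B (Q - {B})" using B by auto
          have pq2: "partition_on (V - {w} - B) (Q - {B})"
            using pq QI partition_on_insert[OF d1, of "V - {w}"] by auto
          have d2: "disjnt (insert w B) (\<Union>(Q - {B}))" using d1 wnot[OF Q] by (auto simp: disjnt_def)
          have "partition_on V (insert (insert w B) (Q - {B}))"
          proof (subst partition_on_insert[OF d2])
            have "V - insert w B = V - {w} - B" by auto
            moreover have "B \<subseteq> V - {w}" using partition_onD1[OF pq] B by auto
            ultimately show "partition_on (V - insert w B) (Q - {B}) \<and> insert w B \<subseteq> V \<and> insert w B \<noteq> {}"
              using pq2 wV by auto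
          qed
          moreover have "{w} \<notin> insert (insert w B) (Q - {B})"
            using Bne wnot[OF Q] B by blast
          ultimately show "ins2 z \<in> S2" unfolding S2_def S_def ins2_def zq by auto
        qed
        show "inv2 \<in> S2 \<rightarrow> SG"
        proof
          fix P assume P: "P \<in> S2"
          then have pv: "partition_on V P" and wP: "{w} \<notin> P" unfolding S2_def S_def by auto
          obtain B0 where B0: "B0 \<in> P" "w \<in> B0" using partition_onD1[OF pv] wV by blast
          have "partition_on (V - {w}) (insert (B0 - {w}) (P - {B0}))"
            using rem_part[OF pv B0 wP] by blast
          then show "inv2 P \<in> SG"
            unfolding inv2_def the_blk[OF pv B0] SG_def PQ_def by auto
        qed
        show "inv2 (ins2 x) = x" if xSG: "x \<in> SG" for x
        proof -
          obtain Q B where zq: "x = (Q, B)" and Q: "Q \<in> PQ" and B: "B \<in> Q" using xSG unfolding SG_def by auto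
          have wn: "w \<notin> C" if "C \<in> Q" for C using wnot[OF Q that] .
          have the: "(THE B0. B0 \<in> ins2 x \<and> w \<in> B0) = insert w B"
          proof (rule the_equality)
            show "insert w B \<in> ins2 x \<and> w \<in> insert w B" unfolding ins2_def zq by simp
            show "C = insert w B" if "C \<in> ins2 x \<and> w \<in> C" for C
              using that wn unfolding ins2_def zq by auto
          qed
          have "insert w B \<notin> Q - {B}" using wn by auto
          then have "ins2 x - {insert w B} = Q - {B}" unfolding ins2_def zq by auto
          moreover have "insert w B - {w} = B" using wn B by auto
          ultimately show ?thesis unfolding inv2_def the by (simp add: zq insert_Diff[OF B] insert_absorb[OF B])
        qed
        show "ins2 (inv2 y) = y" if "y \<in> S2" for y
        proof -
          have pv: "partition_on V y" and wP: "{w} \<notin> y" using that unfolding S2_def S_def by auto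
          obtain B0 where B0: "B0 \<in> y" "w \<in> B0" using partition_onD1[OF pv] wV by blast
          have "B0 - {w} \<notin> y - {B0}" using rem_part[OF pv B0 wP] by blast
          then have "insert (B0 - {w}) (y - {B0}) - {B0 - {w}} = y - {B0}" by auto
          moreover have "insert w (B0 - {w}) = B0" using B0 by auto
          ultimately show ?thesis unfolding inv2_def the_blk[OF pv B0] ins2_def by (simp add: insert_Diff[OF B0(1)] insert_absorb[OF B0(1)])
        qed
      qed
    qed
    finally show ?thesis by simp
  qed
  show ?thesis unfolding S_def[symmetric] PQ_def[symmetric] split part1 part2 sum.distrib ..
qed


definition mu :: "nat \<Rightarrow> complex fps" where "mu k = of_int ((-1) ^ (k - 1) * fact (k - 1))"
definition TT :: "nat set set \<Rightarrow> (nat \<Rightarrow> cpf) \<Rightarrow> complex fps" where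
  "TT P x = (\<Prod>I\<in>P. FF (\<Prod>i\<in>I. x i))"
definition KK :: "nat set \<Rightarrow> (nat \<Rightarrow> cpf) \<Rightarrow> complex fps" where
  "KK V x = (\<Sum>P\<in>{P. partition_on V P}. mu (card P) * TT P x)"
definition KE :: "nat set \<Rightarrow> nat \<Rightarrow> (nat \<Rightarrow> cpf) \<Rightarrow> cpf \<Rightarrow> complex fps" where
  "KE V w x a = (\<Sum>Q\<in>{Q. partition_on (V-{w}) Q}. mu (card Q + 1) * FF a * TT Q x
        + (\<Sum>B\<in>Q. mu (card Q) * FF (a * (\<Prod>i\<in>B. x i)) * TT (Q - {B}) x))"

lemma mu_rec: "k \<ge> 1 \<Longrightarrow> mu (k + 1) + of_nat k * mu k = 0"
proof -
  assume "k \<ge> 1"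
  then obtain j where k: "k = Suc j" by (cases k) auto
  have "mu (k + 1) + of_nat k * mu k = of_int ((-1) ^ Suc j * fact (Suc j) + int (Suc j) * ((-1) ^ j * fact j))"
    unfolding mu_def k by simp
  also have "(-1) ^ Suc j * fact (Suc j) + int (Suc j) * ((-1) ^ j * fact j) = (0::int)"
    by (simp add: algebra_simps)
  finally show ?thesis by simp
qed

lemma TT_upd: "(\<And>B. B \<in> Q \<Longrightarrow> w \<notin> B) \<Longrightarrow> TT Q (x(w := a)) = TT Q x"
  unfolding TT_def by (intro prod.cong refl arg_cong[where f = FF]) auto

lemma PQ_facts:
  assumes fin: "finite V" and Q: "partition_on (V - {w}) Q"
  shows "finite Q" "\<And>B. B \<in> Q \<Longrightarrow> finite B" "\<And>B. B \<in> Q \<Longrightarrow> w \<notin> B" "{w} \<notin> Q"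
    "\<And>B. B \<in> Q \<Longrightarrow> insert w B \<notin> Q - {B}"
proof -
  show "finite Q" using fin finite_elements[of "V-{w}" Q] Q by auto
  show fB: "finite B" if "B \<in> Q" for B
  proof -
    have "B \<subseteq> V" using partition_onD1[OF Q] that by auto
    then show ?thesis using fin by (rule finite_subset)
  qed
  show wn: "w \<notin> B" if "B \<in> Q" for B using partition_onD1[OF Q] that by auto
  show "{w} \<notin> Q" using wn by auto
  show "insert w B \<notin> Q - {B}" if "B \<in> Q" for B using wn by auto
qed

lemma KK_upd:
  assumes fin: "finite V" and wV: "w \<in> V"
  shows "KK V (x(w := a)) = KE V w x a"
  unfolding KK_def KE_def
proof (subst sum_partitions_remove[OF fin wV], rule sum.cong[OF refl])
  fix Q assume "Q \<in> {Q. partition_on (V - {w}) Q}"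
  then have Q: "partition_on (V - {w}) Q" by simp
  note F = PQ_facts[OF fin Q]
  have TQ: "TT Q (x(w := a)) = TT Q x" by (rule TT_upd) (use F(3) in auto)
  have c1: "card (insert {w} Q) = card Q + 1" using F(1,4) by simp
  have t1: "TT (insert {w} Q) (x(w := a)) = FF a * TT Q x"
    using F(1,4) TQ unfolding TT_def by simp
  have B: "mu (card (insert (insert w B) (Q - {B}))) * TT (insert (insert w B) (Q - {B})) (x(w := a))
         = mu (card Q) * FF (a * (\<Prod>i\<in>B. x i)) * TT (Q - {B}) x" if B: "B \<in> Q" for B
  proof -
    have "card Q \<ge> 1" using F(1) B by (metis One_nat_def Suc_leI card_gt_0_iff empty_iff)
    then have c: "card (insert (insert w B) (Q - {B})) = card Q"
      using F(1) F(5)[OF B] B by (simp add: card_Diff_singleton)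
    have p: "(\<Prod>i\<in>insert w B. (x(w := a)) i) = a * (\<Prod>i\<in>B. x i)"
    proof -
      have "(\<Prod>i\<in>B. (x(w := a)) i) = (\<Prod>i\<in>B. x i)" by (rule prod.cong) (use F(3)[OF B] in auto)
      then show ?thesis using prod.insert[OF F(2)[OF B] F(3)[OF B], of "x(w := a)"] by simp
    qed
    have t: "TT (Q - {B}) (x(w := a)) = TT (Q - {B}) x" by (rule TT_upd) (use F(3) in auto)
    have "TT (insert (insert w B) (Q - {B})) (x(w := a)) = FF (a * (\<Prod>i\<in>B. x i)) * TT (Q - {B}) x"
      using F(1) F(5)[OF B] t p unfolding TT_def by simp
    then show ?thesis using c by (simp add: mult.assoc)
  qed
  show "mu (card (insert {w} Q)) * TT (insert {w} Q) (x(w := a)) +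
        (\<Sum>B\<in>Q. mu (card (insert (insert w B) (Q - {B}))) * TT (insert (insert w B) (Q - {B})) (x(w := a))) =
        mu (card Q + 1) * FF a * TT Q x + (\<Sum>B\<in>Q. mu (card Q) * FF (a * prod x B) * TT (Q - {B}) x)"
    using c1 t1 B by (simp add: mult.assoc)
qed

lemma KK_eq_KE: "finite V \<Longrightarrow> w \<in> V \<Longrightarrow> KK V x = KE V w x (x w)"
  using KK_upd[of V w x "x w"] by simp

lemma KE_add: "KE V w x (a + b) = KE V w x a + KE V w x b"
proof -
  have "\<And>p. FF ((a + b) * p) = FF (a * p) + FF (b * p)" by (simp add: distrib_right FF_add)
  then show ?thesis unfolding KE_def sum.distrib[symmetric]
    by (intro sum.cong refl) (simp add: FF_add distrib_left distrib_right sum.distrib add_ac)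
qed

lemma KE_lin: "KE V w x (Ec c * a) = c * KE V w x a"
proof -
  have "\<And>p. FF ((Ec c * a) * p) = c * FF (a * p)" by (simp add: mult.assoc FF_lin)
  then show ?thesis unfolding KE_def sum_distrib_left
    by (intro sum.cong refl) (simp add: FF_lin distrib_left sum_distrib_left mult.assoc mult.left_commute)
qed

lemma KE_one:
  assumes fin: "finite V" and ne: "V - {w} \<noteq> {}"
  shows "KE V w x 1 = 0"
  unfolding KE_def
proof (rule sum.neutral, rule ballI)
  fix Q assume "Q \<in> {Q. partition_on (V - {w}) Q}"
  then have Q: "partition_on (V - {w}) Q" by simp
  note F = PQ_facts[OF fin Q]
  have "Q \<noteq> {}" using partition_onD1[OF Q] ne by auto
  then have k: "card Q \<ge> 1" using F(1) by (simp add: Suc_le_eq card_gt_0_iff)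
  have "FF (\<Prod>i\<in>B. x i) * TT (Q - {B}) x = TT Q x" if "B \<in> Q" for B
    unfolding TT_def using F(1) that by (simp add: prod.remove)
  then have "(\<Sum>B\<in>Q. mu (card Q) * FF (1 * (\<Prod>i\<in>B. x i)) * TT (Q - {B}) x) = of_nat (card Q) * mu (card Q) * TT Q x"
    by (simp add: mult.assoc)
  then show "mu (card Q + 1) * FF 1 * TT Q x + (\<Sum>B\<in>Q. mu (card Q) * FF (1 * prod x B) * TT (Q - {B}) x) = 0"
    using mu_rec[OF k] by (simp add: distrib_right[symmetric])
qed


lemma FF_stein_prod:
  assumes "finite B"
  shows "FF (tt * Y * (\<Prod>i\<in>B. x i)) = - fps_X * (FF (Dz Y * (\<Prod>i\<in>B. x i)) +
            (\<Sum>j\<in>B. FF (Y * Dz (x j) * (\<Prod>i\<in>B-{j}. x i))))"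
proof -
  have "Dz (Y * (\<Prod>i\<in>B. x i)) = Dz Y * (\<Prod>i\<in>B. x i) + (\<Sum>j\<in>B. Y * Dz (x j) * (\<Prod>i\<in>B-{j}. x i))"
    by (simp add: Dz_mult Dz_prod[OF assms] sum_distrib_left mult.assoc)
  then show ?thesis
    by (simp add: mult.assoc FF_stein FF_add FF_sum)
qed

lemma KE_stein:
  assumes fin: "finite V" and wV: "w \<in> V"
  shows "KE V w x (tt * Y) = - fps_X * (KE V w x (Dz Y) + (\<Sum>j\<in>V-{w}. KK (V-{j}) (x(w := Y * Dz (x j)))))"
proof -
  define PQ where "PQ = {Q. partition_on (V-{w}) Q}"
  define H where "H Q B j = mu (card Q) * FF (Y * Dz (x j) * (\<Prod>i\<in>B-{j}. x i)) * TT (Q - {B}) x" for Q B j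
  have step2: "KE V w x (tt * Y) = - fps_X * (KE V w x (Dz Y) + (\<Sum>Q\<in>PQ. \<Sum>B\<in>Q. \<Sum>j\<in>B. H Q B j))"
  proof -
    have "KE V w x (tt * Y) = (\<Sum>Q\<in>PQ. - fps_X * (mu (card Q + 1) * FF (Dz Y) * TT Q x
        + (\<Sum>B\<in>Q. mu (card Q) * FF (Dz Y * (\<Prod>i\<in>B. x i)) * TT (Q - {B}) x)) + - fps_X * (\<Sum>B\<in>Q. \<Sum>j\<in>B. H Q B j))"
      unfolding KE_def PQ_def
    proof (rule sum.cong[OF refl])
      fix Q assume "Q \<in> {Q. partition_on (V - {w}) Q}"
      then have Q: "partition_on (V - {w}) Q" by simp
      note F = PQ_facts[OF fin Q]
      have b: "mu (card Q) * FF (tt * Y * (\<Prod>i\<in>B. x i)) * TT (Q - {B}) x =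
          - fps_X * (mu (card Q) * FF (Dz Y * (\<Prod>i\<in>B. x i)) * TT (Q - {B}) x) + - fps_X * (\<Sum>j\<in>B. H Q B j)"
        if B: "B \<in> Q" for B
      proof -
        have e1: "(\<Sum>j\<in>B. H Q B j) = mu (card Q) * (\<Sum>j\<in>B. FF (Y * Dz (x j) * (\<Prod>i\<in>B-{j}. x i))) * TT (Q-{B}) x"
          unfolding H_def by (simp add: sum_distrib_left sum_distrib_right)
        show ?thesis unfolding e1 FF_stein_prod[OF F(2)[OF B]] by algebra
      qed
      show "mu (card Q + 1) * FF (tt * Y) * TT Q x + (\<Sum>B\<in>Q. mu (card Q) * FF (tt * Y * prod x B) * TT (Q - {B}) x) =
        - fps_X * (mu (card Q + 1) * FF (Dz Y) * TT Q x + (\<Sum>B\<in>Q. mu (card Q) * FF (Dz Y * prod x B) * TT (Q - {B}) x))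
         + - fps_X * (\<Sum>B\<in>Q. \<Sum>j\<in>B. H Q B j)"
      proof -
        have s1: "(\<Sum>B\<in>Q. mu (card Q) * FF (tt * Y * prod x B) * TT (Q - {B}) x) =
          - fps_X * (\<Sum>B\<in>Q. mu (card Q) * FF (Dz Y * prod x B) * TT (Q - {B}) x) + - fps_X * (\<Sum>B\<in>Q. \<Sum>j\<in>B. H Q B j)"
        proof -
          have "(\<Sum>B\<in>Q. mu (card Q) * FF (tt * Y * prod x B) * TT (Q - {B}) x) =
            (\<Sum>B\<in>Q. - fps_X * (mu (card Q) * FF (Dz Y * prod x B) * TT (Q - {B}) x) + - fps_X * (\<Sum>j\<in>B. H Q B j))"
            by (rule sum.cong[OF refl]) (rule b)
          also have "\<dots> = - fps_X * (\<Sum>B\<in>Q. mu (card Q) * FF (Dz Y * prod x B) * TT (Q - {B}) x) + - fps_X * (\<Sum>B\<in>Q. \<Sum>j\<in>B. H Q B j)"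
            by (simp only: sum.distrib sum_distrib_left)
          finally show ?thesis .
        qed
        show ?thesis unfolding s1 FF_stein by algebra
      qed
    qed
    also have "\<dots> = - fps_X * (KE V w x (Dz Y) + (\<Sum>Q\<in>PQ. \<Sum>B\<in>Q. \<Sum>j\<in>B. H Q B j))"
      unfolding KE_def PQ_def by (simp only: sum.distrib sum_distrib_left distrib_left)
    finally show ?thesis .
  qed
  have step3: "(\<Sum>Q\<in>PQ. \<Sum>B\<in>Q. \<Sum>j\<in>B. H Q B j) = (\<Sum>j\<in>V-{w}. \<Sum>Q\<in>PQ. \<Sum>B\<in>Q. if j \<in> B then H Q B j else 0)"
  proof -
    have "(\<Sum>Q\<in>PQ. \<Sum>B\<in>Q. \<Sum>j\<in>B. H Q B j) = (\<Sum>Q\<in>PQ. \<Sum>B\<in>Q. \<Sum>j\<in>V-{w}. if j \<in> B then H Q B j else 0)"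
    proof (rule sum.cong[OF refl], rule sum.cong[OF refl])
      fix Q B assume "Q \<in> PQ" "B \<in> Q"
      then have "B \<subseteq> V - {w}" unfolding PQ_def using partition_onD1 by blast
      then show "(\<Sum>j\<in>B. H Q B j) = (\<Sum>j\<in>V-{w}. if j \<in> B then H Q B j else 0)"
      proof -
        have "(\<Sum>j\<in>V-{w}. if j \<in> B then H Q B j else 0) = (\<Sum>j\<in>(V-{w}) \<inter> B. H Q B j)"
          by (rule sum.inter_restrict[symmetric]) (use fin in simp)
        then show ?thesis using Int_absorb1[OF \<open>B \<subseteq> V - {w}\<close>] by simp
      qed
    qed
    also have "\<dots> = (\<Sum>Q\<in>PQ. \<Sum>j\<in>V-{w}. \<Sum>B\<in>Q. if j \<in> B then H Q B j else 0)"
      by (intro sum.cong refl sum.swap)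
    also have "\<dots> = (\<Sum>j\<in>V-{w}. \<Sum>Q\<in>PQ. \<Sum>B\<in>Q. if j \<in> B then H Q B j else 0)"
      by (rule sum.swap)
    finally show ?thesis .
  qed
  have step4: "(\<Sum>Q\<in>PQ. \<Sum>B\<in>Q. if j \<in> B then H Q B j else 0) = KK (V-{j}) (x(w := Y * Dz (x j)))"
    if j: "j \<in> V - {w}" for j
  proof -
    have finW: "finite (V - {w})" using fin by simp
    have eq: "V - {w} - {j} = V - {j} - {w}" by auto
    have wVj: "w \<in> V - {j}" using j wV by auto
    have "(\<Sum>Q\<in>PQ. \<Sum>B\<in>Q. if j \<in> B then H Q B j else 0) =
      (\<Sum>Q'\<in>{Q. partition_on (V - {j} - {w}) Q}. mu (card Q' + 1) * FF (Y * Dz (x j)) * TT Q' x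
        + (\<Sum>B\<in>Q'. mu (card Q') * FF (Y * Dz (x j) * (\<Prod>i\<in>B. x i)) * TT (Q' - {B}) x))"
      unfolding PQ_def sum_partitions_remove[OF finW j] eq[symmetric]
    proof (rule sum.cong[OF refl])
      fix Q' assume "Q' \<in> {Q. partition_on (V - {w} - {j}) Q}"
      then have Q': "partition_on (V - {w} - {j}) Q'" by simp
      note F = PQ_facts[OF finW Q']
      have g1: "(\<Sum>B\<in>insert {j} Q'. if j \<in> B then H (insert {j} Q') B j else 0) =
                mu (card Q' + 1) * FF (Y * Dz (x j)) * TT Q' x"
      proof -
        have "(\<Sum>B\<in>insert {j} Q'. if j \<in> B then H (insert {j} Q') B j else 0) = H (insert {j} Q') {j} j"
          using F(1,3,4) by (simp add: sum.insert)
        also have "\<dots> = mu (card Q' + 1) * FF (Y * Dz (x j)) * TT Q' x"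
        proof -
          have "insert {j} Q' - {{j}} = Q'" using F(4) by auto
          then show ?thesis unfolding H_def using F(1,4) by simp
        qed
        finally show ?thesis .
      qed
      have g2: "(\<Sum>B\<in>insert (insert j B') (Q' - {B'}). if j \<in> B then H (insert (insert j B') (Q' - {B'})) B j else 0) =
                mu (card Q') * FF (Y * Dz (x j) * (\<Prod>i\<in>B'. x i)) * TT (Q' - {B'}) x"
        if B': "B' \<in> Q'" for B'
      proof -
        have nin: "insert j B' \<notin> Q' - {B'}" using F(5)[OF B'] .
        have z: "(\<Sum>B\<in>Q' - {B'}. if j \<in> B then H (insert (insert j B') (Q' - {B'})) B j else 0) = 0"
          using F(3) by (intro sum.neutral) auto
        have "card Q' \<ge> 1" using F(1) B' by (metis One_nat_def Suc_leI card_gt_0_iff empty_iff)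
        then have c: "card (insert (insert j B') (Q' - {B'})) = card Q'"
          using F(1) nin B' by (simp add: card_Diff_singleton)
        have d1: "insert (insert j B') (Q' - {B'}) - {insert j B'} = Q' - {B'}" using nin by auto
        have d2: "insert j B' - {j} = B'" using F(3)[OF B'] by auto
        have "(\<Sum>B\<in>insert (insert j B') (Q' - {B'}). if j \<in> B then H (insert (insert j B') (Q' - {B'})) B j else 0)
              = H (insert (insert j B') (Q' - {B'})) (insert j B') j"
          using F(1) nin z by (simp add: sum.insert)
        also have "\<dots> = mu (card Q') * FF (Y * Dz (x j) * (\<Prod>i\<in>B'. x i)) * TT (Q' - {B'}) x"
          unfolding H_def c d1 d2 ..
        finally show ?thesis .
      qed
      show "(\<Sum>B\<in>insert {j} Q'. if j \<in> B then H (insert {j} Q') B j else 0) +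
        (\<Sum>B\<in>Q'. \<Sum>Ba\<in>insert (insert j B) (Q' - {B}). if j \<in> Ba then H (insert (insert j B) (Q' - {B})) Ba j else 0) =
        mu (card Q' + 1) * FF (Y * Dz (x j)) * TT Q' x + (\<Sum>B\<in>Q'. mu (card Q') * FF (Y * Dz (x j) * prod x B) * TT (Q' - {B}) x)"
        using g1 g2 by simp
    qed
    also have "\<dots> = KE (V - {j}) w x (Y * Dz (x j))" unfolding KE_def ..
    also have "\<dots> = KK (V-{j}) (x(w := Y * Dz (x j)))" using KK_upd[of "V - {j}" w x] fin wVj by simp
    finally show ?thesis .
  qed
  show ?thesis unfolding step2 step3 using step4 by simp
qed

definition ptail :: "complex poly \<Rightarrow> complex poly" where "ptail p = poly_shift 1 p"

lemma ptail_decomp: "p = [:coeff p 0:] + pCons 0 (ptail p)"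
  by (rule poly_eqI) (simp add: ptail_def coeff_pCons coeff_poly_shift split: nat.split)

lemma KK_vanish: "finite V \<Longrightarrow> N + 1 < card V \<Longrightarrow> fps_nth (KK V x) N = 0"
proof (induction N arbitrary: V x rule: less_induct)
  case (less N)
  note fin = less.prems(1)
  obtain w where wV: "w \<in> V" using less.prems(2) by fastforce
  define c where "c = Abs_fps (\<lambda>n. coeff (fps_nth (x w) n) 0)"
  define Y where "Y = Abs_fps (\<lambda>n. ptail (fps_nth (x w) n))"
  have dec: "x w = Ec c * 1 + tt * Y"
  proof (rule fps_ext)
    fix n
    show "fps_nth (x w) n = fps_nth (Ec c * 1 + tt * Y) n"
      unfolding c_def Y_def Ec_def tt_def using ptail_decomp[of "fps_nth (x w) n"] by simp
  qed
  have ne: "V - {w} \<noteq> {}"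
  proof
    assume "V - {w} = {}"
    then have "V \<subseteq> {w}" by auto
    then have "card V \<le> 1" using card_mono[of "{w}" V] by simp
    then show False using less.prems(2) by simp
  qed
  have "KK V x = KE V w x (x w)" by (rule KK_eq_KE[OF fin wV])
  also have "\<dots> = c * KE V w x 1 + KE V w x (tt * Y)" unfolding dec KE_add KE_lin ..
  also have "\<dots> = - fps_X * (KK V (x(w := Dz Y)) + (\<Sum>j\<in>V-{w}. KK (V-{j}) (x(w := Y * Dz (x j)))))"
    using KE_one[OF fin ne] KE_stein[OF fin wV] KK_upd[OF fin wV] by simp
  finally have eq: "KK V x = - fps_X * (KK V (x(w := Dz Y)) + (\<Sum>j\<in>V-{w}. KK (V-{j}) (x(w := Y * Dz (x j)))))" .
  show ?case
  proof (cases N)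
    case 0 then show ?thesis unfolding eq by simp
  next
    case (Suc M)
    have a: "fps_nth (KK V (x(w := Dz Y))) M = 0" using less.IH[of M V] Suc less.prems by simp
    have b: "fps_nth (KK (V-{j}) (x(w := Y * Dz (x j)))) M = 0" if "j \<in> V - {w}" for j
    proof -
      have "card (V - {j}) = card V - 1" using that fin by simp
      then show ?thesis using less.IH[of M "V - {j}"] Suc less.prems by simp
    qed
    show ?thesis unfolding eq using Suc a b by (simp add: fps_sum_nth)
  qed
qed



lemma Ah_zero: "phi1 X = 0 \<Longrightarrow> phi2 X = 0 \<Longrightarrow> X = 0"
  using Ah_eq[of X 0] by simp

lemma bvA: "bv_inf_alg mulAh oneAh homA hdvdA scAh DeltaA"
  unfolding bv_inf_alg_def
proof (intro conjI allI impI)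
  fix p x
  show "DeltaA (scAh p x) = scAh p (DeltaA x)"
    by (rule Ah_eq) (simp_all add: phi1_Delta phi2_Delta phi1_sc phi2_sc Dz_mult algebra_simps)
next
  fix x y
  show "DeltaA (x + y) = DeltaA x + DeltaA y"
    by (rule Ah_eq) (simp_all add: phi1_Delta phi2_Delta phi1_add phi2_add Dz_add algebra_simps)
next
  fix d x assume "homA d x"
  then show "homA (d + 1) (DeltaA x)"
    unfolding homA_Psi homP_def Psi_def by (auto simp: phi1_Delta phi2_Delta)
next
  show "DeltaA oneAh = 0" by (rule Ah_zero) (simp_all add: phi1_Delta phi2_Delta phi2_one)
next
  fix x show "DeltaA (DeltaA x) = 0" by (rule Ah_zero) (simp_all add: phi1_Delta phi2_Delta)
next
  fix k :: nat and al d
  assume k: "2 \<le> k" and h: "\<forall>i<k. homA (d i) (al i)"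
  define Z where "Z = ad_seq mulAh DeltaA 1 al d k oneAh"
  have hP: "homP (d i) (Psi (al i))" if "i < k" for i using h that homA_Psi by blast
  have PZ: "Psi Z = ad_seq MM DD 1 (\<lambda>i. Psi (al i)) d k (Psi oneAh)"
    unfolding Z_def by (rule Psi_ad_seq)
  show "hdvdA (k - 1) (ad_seq mulAh DeltaA 1 al d k oneAh)"
  proof (cases "k = 2")
    case True
    obtain c where c: "fps_nth (fst c) 0 = 0" "fps_nth (snd c) 0 = 0"
      "\<forall>x. ad_seq MM DD 1 (\<lambda>i. Psi (al i)) d (Suc (Suc 0)) x = MM c x"
      using A2_form[of d "\<lambda>i. Psi (al i)"] hP True by fastforce
    have "Psi Z = MM c (1, 0)" using PZ c(3) True by (simp add: numeral_2_eq_2 Psi_def phi1_one phi2_one)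
    then have "Psi Z = c" by (simp add: MM_def)
    then have "fst (Z 0) = 0" "snd (Z 0) = 0" using c(1,2) unfolding Psi_def
      by (metis fst_conv phi1_nth, metis snd_conv phi2_nth)
    then have "Z 0 = 0" by (simp add: prod_eq_iff)
    then show ?thesis unfolding hdvdA_def Z_def[symmetric] using True by simp
  next
    case False
    then have "k \<ge> 3" using k by simp
    then have "Psi Z = 0" using PZ adk_zero[of k d "\<lambda>i. Psi (al i)"] hP by simp
    then have "Z = 0" by (intro Ah_zero) (simp_all add: Psi_def zero_prod_def)
    then show ?thesis unfolding hdvdA_def Z_def[symmetric] by simp
  qed
qed

lemma ad_seq_zeroB: "ad_seq (*) DeltaB e al d j = (\<lambda>x. 0)"
  by (induction j) (auto simp: DeltaB_def)

lemma bvB: "bv_inf_alg (*) (1::complex fps) homB hdvdB (*) DeltaB"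
  unfolding bv_inf_alg_def by (simp add: DeltaB_def homB_def hdvdB_def ad_seq_zeroB)

lemma bp_phi1: "phi1 (block_prod mulAh oneAh I al) = (\<Prod>i\<in>I. phi1 (al i))"
proof -
  have fo: "phi1 (foldr (\<lambda>i. mulAh (al i)) xs oneAh) = prod_list (map (\<lambda>i. phi1 (al i)) xs)" for xs
    by (induction xs) (simp_all add: phi1_one phi1_mul)
  then show ?thesis
  proof (cases "finite I")
    case True
    then show ?thesis unfolding block_prod_def fo
      using prod.distinct_set_conv_list[of "sorted_list_of_set I" "\<lambda>i. phi1 (al i)"] by simp
  qed (simp add: phi1_one block_prod_def)
qed

lemma cumulant_eq:
  "cumulant mulAh oneAh fA n al d = (\<Sum>P\<in>{P. partition_on {..<n} P}.
      of_int ((-1) ^ (card P - 1) * fact (card P - 1) * koszul_sign n P d) * TT P (\<lambda>i. phi1 (al i)))"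
  unfolding cumulant_def TT_def fA_eq bp_phi1 ..

lemma cumulant_vanish:
  assumes h: "\<forall>i<n. homA (d i) (al i)" and N: "N + 1 < n"
  shows "fps_nth (cumulant mulAh oneAh fA n al d) N = 0"
proof (cases "\<forall>i<n. d i = 0")
  case True
  have "koszul_sign n P d = 1" for P
  proof -
    have e: "{(i, j). i < j \<and> j < n \<and> odd (d i) \<and> odd (d j) \<and> Min (blk P j) < Min (blk P i)} = {}"
      using True by auto
    show ?thesis unfolding koszul_sign_def e by simp
  qed
  then have "cumulant mulAh oneAh fA n al d = KK {..<n} (\<lambda>i. phi1 (al i))"
    unfolding cumulant_eq KK_def mu_def by simp
  then show ?thesis using KK_vanish[of "{..<n}" N] N by simp
next
  case False
  then obtain i where i: "i < n" "d i \<noteq> 0" by auto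
  have z: "phi1 (al i) = 0" using h i homA_Psi[of "d i" "al i"] unfolding homP_def Psi_def by auto
  have "TT P (\<lambda>i. phi1 (al i)) = 0" if P: "partition_on {..<n} P" for P
  proof -
    obtain I where I: "I \<in> P" "i \<in> I" using partition_onD1[OF P] i(1) by blast
    have finI: "finite I" using partition_onD1[OF P] I(1) by (metis Union_upper finite_lessThan finite_subset)
    have "(\<Prod>j\<in>I. phi1 (al j)) = 0" using finI I(2) z by (metis prod_zero_iff)
    moreover have "finite P" using finite_elements[OF _ P] by simp
    ultimately show ?thesis unfolding TT_def using I(1) by (metis FF_0 prod_zero_iff)
  qed
  then have "cumulant mulAh oneAh fA n al d = 0" unfolding cumulant_eq by simp
  then show ?thesis by simp
qed

lemma morph: "bv_inf_mor mulAh oneAh homA scAh DeltaA homB hdvdB (*) DeltaB fA"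
  unfolding bv_inf_mor_def
proof (intro conjI allI impI)
  fix p x show "fA (scAh p x) = p * fA x" by (simp add: fA_eq phi1_sc FF_lin)
next
  fix x y show "fA (x + y) = fA x + fA y" by (simp add: fA_eq phi1_add FF_add)
next
  fix d x assume "homA d x"
  then show "homB d (fA x)" unfolding homA_Psi homP_def Psi_def homB_def by (auto simp: fA_eq)
next
  show "fA oneAh = 1" by (simp add: fA_eq phi1_one)
next
  fix x show "fA (DeltaA x) = DeltaB (fA x)"
    by (simp add: fA_eq phi1_Delta FF_add FF_stein FF_X DeltaB_def)
next
  fix n :: nat and al d
  assume "2 \<le> n" "\<forall>i<n. homA (d i) (al i)"
  then show "hdvdB (n - 1) (cumulant mulAh oneAh fA n al d)"
    unfolding hdvdB_def using cumulant_vanish by auto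
qed

lemma qiso: "quasi_iso0 Delta0 (\<lambda>_::complex. 0) (f_i 0)"
  unfolding quasi_iso0_def
proof (intro conjI allI impI)
  fix x y :: A0 show "f_i 0 (x + y) = f_i 0 x + f_i 0 y" by (simp add: f_i_def dfact_odd_def)
next
  fix a :: A0 show "f_i 0 (Delta0 a) = 0" by (simp add: f_i_def Delta0_def)
next
  fix a :: A0 assume a: "Delta0 a = 0 \<and> f_i 0 a \<in> range (\<lambda>_. 0)"
  then have s: "snd a = 0" by (simp add: Delta0_def prod_eq_iff)
  have c: "coeff (fst a) 0 = 0" using a by (auto simp: f_i_def dfact_odd_def)
  have "fst a = pCons 0 (ptail (fst a))" using ptail_decomp[of "fst a"] c by simp
  then have "a = Delta0 (0, ptail (fst a))" using s by (simp add: Delta0_def prod_eq_iff)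
  then show "a \<in> range Delta0" by blast
next
  fix b :: complex
  show "\<exists>a. Delta0 a = 0 \<and> b - f_i 0 a \<in> range (\<lambda>_. 0)"
    by (rule exI[of _ "([:b:], 0)"]) (simp add: Delta0_def f_i_def dfact_odd_def zero_prod_def)
qed


lemma fps_neg_nth[simp]: "fps_nth (fps_neg p) n = (-1) ^ n * fps_nth p n"
  by (simp add: fps_neg_def)
lemma fps_neg_0[simp]: "fps_neg 0 = 0" by (rule fps_ext) simp
lemma fps_neg_add: "fps_neg (A + B) = fps_neg A + fps_neg B"
  by (rule fps_ext) (simp add: distrib_left)
lemma fps_neg_sum: "fps_neg (\<Sum>i\<in>S. f i) = (\<Sum>i\<in>S. fps_neg (f i))"
proof (cases "finite S")
  case True then show ?thesis by (induction S rule: finite_induct) (simp_all add: fps_neg_add)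
qed simp
lemma fps_neg_mult: "fps_neg (A * B) = fps_neg A * fps_neg B"
proof (rule fps_ext)
  fix n
  have "(-1) ^ n * fps_nth A i * fps_nth B (n - i) = (-1) ^ i * fps_nth A i * ((-1) ^ (n - i) * fps_nth B (n - i))"
    if "i \<in> {0..n}" for i :: nat
  proof -
    have "(-1::complex) ^ n = (-1) ^ i * (-1) ^ (n - i)" using that by (simp add: power_add[symmetric])
    then show ?thesis by simp
  qed
  then have "(\<Sum>i=0..n. (-1) ^ n * fps_nth A i * fps_nth B (n - i)) =
       (\<Sum>i=0..n. (-1) ^ i * fps_nth A i * ((-1) ^ (n - i) * fps_nth B (n - i)))"
    by (rule sum.cong[OF refl])
  then show "fps_nth (fps_neg (A * B)) n = fps_nth (fps_neg A * fps_neg B) n"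
    by (simp add: fps_mult_nth sum_distrib_left mult.assoc)
qed
lemma fps_neg_const: "fps_neg (fps_const c) = fps_const c"
proof (rule fps_ext)
  fix n show "fps_nth (fps_neg (fps_const c)) n = fps_nth (fps_const c) n" by (cases n) simp_all
qed
lemma fps_neg_Xpow: "fps_neg (fps_X ^ i) = fps_const ((-1) ^ i) * fps_X ^ i"
  by (rule fps_ext) (simp add: fps_X_power_nth fps_mult_left_const_nth)

definition vv :: "nat \<Rightarrow> complex fps" where
  "vv a = (if even a then fps_const (cc (a div 2)) * fps_X ^ (a div 2) else 0)"

lemma vv_mono: "vv a * fps_neg (vv b) = mono_pair a b"
proof (cases "even a \<and> even b")
  case True
  define i where "i = a div 2"
  define j where "j = b div 2"
  have m1: "(-1::complex) ^ j * (-1) ^ j = 1" by (simp add: power_mult_distrib[symmetric])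
  have sc: "cc i * cc j * (-1) ^ j = (-1) ^ i * of_nat (dfact_odd i * dfact_odd j)"
  proof -
    have "cc i * cc j * (-1) ^ j = (-1) ^ i * (of_nat (dfact_odd i) * of_nat (dfact_odd j)) * ((-1) ^ j * (-1) ^ j)"
      unfolding cc_def by algebra
    then show ?thesis unfolding m1 by simp
  qed
  have "vv a * fps_neg (vv b) = fps_const (cc i) * fps_X ^ i * (fps_const (cc j) * (fps_const ((-1) ^ j) * fps_X ^ j))"
    using True unfolding vv_def i_def j_def by (simp only: if_True fps_neg_mult fps_neg_const fps_neg_Xpow)
  also have "\<dots> = fps_const (cc i * cc j * (-1) ^ j) * fps_X ^ (i + j)"
    unfolding power_add fps_const_mult[symmetric] by algebra
  also have "\<dots> = mono_pair a b" unfolding sc mono_pair_def using True i_def j_def by simp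
  finally show ?thesis .
next
  case False
  then have "vv a = 0 \<or> vv b = 0" unfolding vv_def by auto
  moreover have "mono_pair a b = 0" using False unfolding mono_pair_def by auto
  ultimately show ?thesis by auto
qed

lemma sum_even_odd: "(\<Sum>a\<le>2*(N::nat). f a) = (\<Sum>i\<le>N. f (2*i)) + (\<Sum>i<N. f (2*i+1))"
proof (induction N)
  case 0 then show ?case by simp
next
  case (Suc N)
  have "{..2 * Suc N} = insert (2*N+2) (insert (2*N+1) {..2*N})" by auto
  then have "(\<Sum>a\<le>2*Suc N. f a) = f (2*N+2) + f (2*N+1) + (\<Sum>a\<le>2*N. f a)" by (simp add: add.assoc)
  then show ?case using Suc by (simp add: add_ac)
qed

lemma SS_as_vv: "SS N Z = (\<Sum>a\<le>2*N. tc a Z * vv a)"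
  unfolding sum_even_odd SS_def vv_def by (simp add: mult_ac)

lemma tcoeff_tc: "tcoeff X a = tc a (phi1 X)"
  by (rule fps_ext) (simp add: tcoeff_def)

lemma pairing: "pairB (fA X) (fA Y) = pairA X Y"
proof (rule fps_ext)
  fix N
  define G where "G = phi1 X"
  define W where "W = phi1 Y"
  have "fps_nth (pairB (fA X) (fA Y)) N = fps_nth (SS N G * fps_neg (SS N W)) N"
    unfolding pairB_def fA_eq G_def[symmetric] W_def[symmetric]
    by (rule nth_mult_cong) (simp_all add: SS_nth)
  also have "SS N G * fps_neg (SS N W) = (\<Sum>a\<le>2*N. \<Sum>b\<le>2*N. tcoeff X a * mono_pair a b * fps_neg (tcoeff Y b))"
  proof -
    have "SS N G * fps_neg (SS N W) = (\<Sum>a\<le>2*N. \<Sum>b\<le>2*N. (tc a G * vv a) * (fps_neg (tc b W) * fps_neg (vv b)))"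
      unfolding SS_as_vv fps_neg_sum fps_neg_mult sum_product ..
    also have "\<dots> = (\<Sum>a\<le>2*N. \<Sum>b\<le>2*N. tc a G * (vv a * fps_neg (vv b)) * fps_neg (tc b W))"
      by (intro sum.cong refl) algebra
    finally show ?thesis unfolding vv_mono tcoeff_tc G_def W_def .
  qed
  also have "fps_nth (\<Sum>a\<le>2*N. \<Sum>b\<le>2*N. tcoeff X a * mono_pair a b * fps_neg (tcoeff Y b)) N = fps_nth (pairA X Y) N"
    unfolding pairA_def by (simp add: fps_sum_nth)
  finally show "fps_nth (pairB (fA X) (fA Y)) N = fps_nth (pairA X Y) N" .
qed

theorem mainTheorem4:
  shows "bv_inf_alg mulAh oneAh homA hdvdA scAh DeltaA
       \<and> bv_inf_alg (*) (1::complex fps) homB hdvdB (*) DeltaB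
       \<and> bv_inf_mor mulAh oneAh homA scAh DeltaA homB hdvdB (*) DeltaB fA
       \<and> quasi_iso0 Delta0 (\<lambda>_::complex. 0) (f_i 0)
       \<and> (\<forall>X Y. DeltaA X = 0 \<longrightarrow> DeltaA Y = 0 \<longrightarrow> pairB (fA X) (fA Y) = pairA X Y)"
  by (intro conjI bvA bvB morph qiso allI impI pairing)

end
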